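(* In the standing setting of the context, assume $d_1>d_4$ and that every ball $B(x,r)$ is relatively compact in $M$. Let $u(x,y)=\int_0^\infty p(t,x,y)\,dt$ be the Green function of $X$. Then for all $x,y\in M$, $$u(x,y)\asymp\frac{\phi(d(x,y))}{V(d(x,y))}.$$
   Context: Standing setting: $(M,d)$ is a locally compact separable metric space, $\mu$ a positive Radon measure on $M$ with full support, $(\mathcal{E},\mathcal{F})$ a regular Dirichlet form on $L^2(M;\mu)$ (no killing part), and $X$ the associated $\mu$-symmetric Hunt process. $V,\phi$ are increasing functions on $(0,\infty)$, $\phi^{-1}$ the inverse of $\phi$, with constants $c_i,d_i>0$ such that $c_1(R/r)^{d_1}\le V(R)/V(r)\le c_2(R/r)^{d_2}$ and $c_3(R/r)^{d_3}\le\phi(R)/\phi(r)\le c_4(R/r)^{d_4}$ for all $0<r<R<\infty$. $X$ has a symmetric heat kernel $p(t,x,y)$ defined for all $x,y\in M$, $t>0$, with $p(t,x,y)\asymp\frac{1}{V(\phi^{-1}(t))}\wedge\frac{t}{V(d(x,y))\phi(d(x,y))}$ for all $x,y,t$. $f\asymp g$ means $c^{-1}f\le g\le cf$ with $c\ge1$ independent of the variables. *)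

theory Defs
  imports "HOL-Analysis.Analysis"
begin

text \<open>Two-sided heat kernel profile
  1/V(phi^{-1}(t)) \<and> t/(V(d(x,y)) phi(d(x,y))).
  On the diagonal (d(x,y) = 0) the second term is +infinity by convention,
  so the profile is 1/V(phi^{-1}(t)).\<close>
definition hk_profile ::
  "(real \<Rightarrow> real) \<Rightarrow> (real \<Rightarrow> real) \<Rightarrow> (real \<Rightarrow> real) \<Rightarrow> real \<Rightarrow> 'a::metric_space \<Rightarrow> 'a \<Rightarrow> real"
where
  "hk_profile V \<phi> \<phi>inv t x y =
     (if x = y then 1 / V (\<phi>inv t)
      else min (1 / V (\<phi>inv t)) (t / (V (dist x y) * \<phi> (dist x y))))"

definition green_fun :: "(real \<Rightarrow> 'a \<Rightarrow> 'a \<Rightarrow> real) \<Rightarrow> 'a \<Rightarrow> 'a \<Rightarrow> ennreal" where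
  "green_fun p x y = (\<integral>\<^sup>+ t \<in> {0<..}. ennreal (p t x y) \<partial>lborel)"

end

theory Submission
  imports Defs
begin

theorem lemma4p6:
  fixes V \<phi> \<phi>inv :: "real \<Rightarrow> real"
    and p :: "real \<Rightarrow> 'a::{metric_space, second_countable_topology} \<Rightarrow> 'a \<Rightarrow> real"
    and c1 c2 c3 c4 d1 d2 d3 d4 :: real
  assumes V_mono: "mono_on {0<..} V" and V_pos: "\<forall>r>0. V r > 0"
    and phi_mono: "mono_on {0<..} \<phi>" and phi_pos: "\<forall>r>0. \<phi> r > 0"
    and phi_inv1: "\<forall>t>0. \<phi>inv t > 0 \<and> \<phi> (\<phi>inv t) = t"
    and phi_inv2: "\<forall>r>0. \<phi>inv (\<phi> r) = r"
    and consts_pos: "c1 > 0" "c2 > 0" "c3 > 0" "c4 > 0" "d1 > 0" "d2 > 0" "d3 > 0" "d4 > 0"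
    and V_scale: "\<forall>r R. 0 < r \<and> r < R \<longrightarrow>
        c1 * (R / r) powr d1 \<le> V R / V r \<and> V R / V r \<le> c2 * (R / r) powr d2"
    and phi_scale: "\<forall>r R. 0 < r \<and> r < R \<longrightarrow>
        c3 * (R / r) powr d3 \<le> \<phi> R / \<phi> r \<and> \<phi> R / \<phi> r \<le> c4 * (R / r) powr d4"
    and balls_rc: "\<forall>x r. compact (closure (ball (x::'a) r))"
    and p_meas: "\<forall>x y. (\<lambda>t. p t x y) \<in> borel_measurable lborel"
    and p_sym: "\<forall>t>0. \<forall>x y. p t x y = p t y x"
    and hk: "\<exists>C\<ge>1. \<forall>t>0. \<forall>x y.
        hk_profile V \<phi> \<phi>inv t x y / C \<le> p t x y \<and> p t x y \<le> C * hk_profile V \<phi> \<phi>inv t x y"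
    and d14: "d1 > d4"
  shows "\<exists>C\<ge>1. \<forall>x y. x \<noteq> y \<longrightarrow>
     ennreal (\<phi> (dist x y) / V (dist x y) / C) \<le> green_fun p x y \<and>
     green_fun p x y \<le> ennreal (C * (\<phi> (dist x y) / V (dist x y)))"
proof -
  obtain C0 where C0: "C0 \<ge> 1" and hkC: "\<forall>t>0. \<forall>x y.
        hk_profile V \<phi> \<phi>inv t x y / C0 \<le> p t x y \<and> p t x y \<le> C0 * hk_profile V \<phi> \<phi>inv t x y"
    using hk by blast
  define a where "a = d1 / d4"
  have a1: "a > 1" using d14 consts_pos unfolding a_def by simp
  define C where "C = 4 * C0 * (1 + c4 powr a / (c1 * (a - 1)))"
  have CC0: "C \<ge> 4 * C0" unfolding C_def using C0 a1 consts_pos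
    by (simp add: mult_le_cancel_left1)
  have C1: "C \<ge> 1" using CC0 C0 by linarith
  show ?thesis
  proof (intro exI[of _ C] conjI allI impI C1)
    fix x y :: 'a assume xy: "x \<noteq> y"
    define r where "r = dist x y"
    have r0: "r > 0" using xy unfolding r_def by simp
    define Vr where "Vr = V r"
    define Pr where "Pr = \<phi> r"
    have Vr0: "Vr > 0" using V_pos r0 unfolding Vr_def by blast
    have Pr0: "Pr > 0" using phi_pos r0 unfolding Pr_def by blast
    have prof: "hk_profile V \<phi> \<phi>inv t x y = min (1 / V (\<phi>inv t)) (t / (Vr * Pr))" for t
      using xy unfolding hk_profile_def Vr_def Pr_def r_def by simp
    have inv_le: "\<phi>inv t \<le> r" if "0 < t" "t \<le> Pr" for t
    proof (rule ccontr)
      assume "\<not> \<phi>inv t \<le> r"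
      hence "r < \<phi>inv t" by simp
      moreover have "\<phi>inv t > 0" "\<phi> (\<phi>inv t) = t" using phi_inv1 that by auto
      ultimately have "Pr \<le> t" using phi_mono r0 unfolding Pr_def mono_on_def by fastforce
      hence "t = Pr" using that by simp
      hence "\<phi>inv t = r" using phi_inv2 r0 unfolding Pr_def by simp
      thus False using \<open>r < \<phi>inv t\<close> by simp
    qed
    have inv_gt: "\<phi>inv t > r" if "t > Pr" for t
    proof (rule ccontr)
      assume "\<not> \<phi>inv t > r"
      moreover have "\<phi>inv t > 0" "\<phi> (\<phi>inv t) = t" using phi_inv1 that Pr0 by auto
      ultimately have "t \<le> Pr" using phi_mono r0 unfolding Pr_def mono_on_def by fastforce
      thus False using that by simp
    qed
    have Vinv_le: "V (\<phi>inv t) \<le> Vr" if "0 < t" "t \<le> Pr" for t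
      using inv_le[OF that] phi_inv1 that V_mono r0 unfolding Vr_def mono_on_def by fastforce
    have Vinv_pos: "V (\<phi>inv t) > 0" if "0 < t" for t
      using phi_inv1 V_pos that by blast
    have low_pt: "p t x y \<ge> 1 / (2 * Vr * C0)" if "Pr / 2 \<le> t" "t \<le> Pr" for t
    proof -
      have t0: "t > 0" using that Pr0 by linarith
      have h1: "1 / V (\<phi>inv t) \<ge> 1 / Vr"
        using Vinv_le[OF t0 that(2)] Vinv_pos[OF t0] by (simp add: frac_le)
      have h2: "t / (Vr * Pr) \<ge> 1 / (2 * Vr)"
        using that Vr0 Pr0 by (simp add: field_simps)
      have "hk_profile V \<phi> \<phi>inv t x y \<ge> 1 / (2 * Vr)"
        proof -
        have "1 / (2 * Vr) \<le> 1 / Vr" using Vr0 by (simp add: frac_le)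
        thus ?thesis using h1 h2 unfolding prof by linarith
      qed
      moreover have "hk_profile V \<phi> \<phi>inv t x y / C0 \<le> p t x y" using hkC t0 by blast
      ultimately have "1 / (2 * Vr) / C0 \<le> p t x y"
        using C0 by (meson divide_right_mono le_less_trans less_eq_real_def zero_less_one order_trans)
      thus ?thesis by simp
    qed
    have green_def': "green_fun p x y = (\<integral>\<^sup>+ t. ennreal (p t x y) * indicator {0<..} t \<partial>lborel)"
      unfolding green_fun_def by simp
    have "(\<integral>\<^sup>+ t. ennreal (1 / (2 * Vr * C0)) * indicator {Pr/2..Pr} t \<partial>lborel)
          \<le> (\<integral>\<^sup>+ t. ennreal (p t x y) * indicator {0<..} t \<partial>lborel)"
    proof (rule nn_integral_mono)
      fix t show "ennreal (1 / (2 * Vr * C0)) * indicator {Pr/2..Pr} t \<le> ennreal (p t x y) * indicator {0<..} t"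
      proof (cases "t \<in> {Pr/2..Pr}")
        case True
        hence "t > 0" using Pr0 by auto
        with True low_pt show ?thesis by (auto intro: ennreal_leI)
      qed simp
    qed
    also have "(\<integral>\<^sup>+ t. ennreal (1 / (2 * Vr * C0)) * indicator {Pr/2..Pr} t \<partial>lborel)
       = ennreal (Pr / (4 * Vr * C0))"
    proof -
      have "(\<integral>\<^sup>+ t. ennreal (1 / (2 * Vr * C0)) * indicator {Pr/2..Pr} t \<partial>lborel)
         = ennreal (1 / (2 * Vr * C0)) * ennreal (Pr - Pr / 2)"
        by (subst nn_integral_cmult_indicator) (use Pr0 in auto)
      also have "\<dots> = ennreal (Pr / (4 * Vr * C0))"
        using Pr0 Vr0 C0 by (simp add: ennreal_mult[symmetric] field_simps)
      finally show ?thesis .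
    qed
    finally have lowint: "ennreal (Pr / (4 * Vr * C0)) \<le> green_fun p x y" unfolding green_def' .
    have "Pr / Vr / C \<le> Pr / (4 * Vr * C0)"
      using CC0 C0 Pr0 Vr0 by (simp add: frac_le divide_divide_eq_left mult.commute mult.left_commute)
    hence "ennreal (Pr / Vr / C) \<le> green_fun p x y"
      using lowint by (meson ennreal_leI order_trans)
    thus "ennreal (\<phi> (dist x y) / V (dist x y) / C) \<le> green_fun p x y"
      unfolding Pr_def Vr_def r_def .
    define K where "K = (c4 * Pr) powr a / (c1 * Vr)"
    have K0: "K > 0" unfolding K_def using consts_pos Pr0 Vr0 by simp
    have up1: "p t x y \<le> C0 / Vr" if "0 < t" "t \<le> Pr" for t
    proof -
      have "t / (Vr * Pr) \<le> 1 / Vr" using that Vr0 Pr0 by (simp add: field_simps)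
      hence "hk_profile V \<phi> \<phi>inv t x y \<le> 1 / Vr" unfolding prof by linarith
      moreover have "p t x y \<le> C0 * hk_profile V \<phi> \<phi>inv t x y" using hkC that by blast
      ultimately have "p t x y \<le> C0 * (1 / Vr)"
        using C0 by (meson mult_left_mono order_trans zero_le_one order_trans less_eq_real_def)
      thus ?thesis by simp
    qed
    have up2: "p t x y \<le> C0 * K * t powr (-a)" if tP: "t > Pr" for t
    proof -
      have t0: "t > 0" using tP Pr0 by linarith
      define s where "s = \<phi>inv t"
      have sr: "s > r" using inv_gt[OF tP] unfolding s_def .
      have phis: "\<phi> s = t" using phi_inv1 t0 unfolding s_def by blast
      define q where "q = (s / r) powr d1"
      have q0: "q > 0" unfolding q_def using sr r0 by simp
      have Vs: "V s \<ge> c1 * q * Vr"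
      proof -
        have "c1 * q \<le> V s / Vr" using V_scale r0 sr unfolding q_def Vr_def by blast
        thus ?thesis using Vr0 by (simp add: field_simps)
      qed
      have "t / Pr \<le> c4 * (s / r) powr d4" using phi_scale r0 sr phis unfolding Pr_def by metis
      hence "t / (c4 * Pr) \<le> (s / r) powr d4" using consts_pos Pr0 by (simp add: field_simps)
      hence "(t / (c4 * Pr)) powr a \<le> ((s / r) powr d4) powr a"
        using a1 t0 consts_pos Pr0 by (intro powr_mono2) auto
      also have "\<dots> = q" unfolding q_def a_def using consts_pos by (simp add: powr_powr)
      finally have "t powr a / (c4 * Pr) powr a \<le> q"
        using t0 consts_pos Pr0 by (simp add: powr_divide)
      hence tq: "t powr a \<le> (c4 * Pr) powr a * q"
        using consts_pos Pr0 by (simp add: field_simps)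
      have ta0: "t powr a > 0" using t0 by simp
      have "1 / V s \<le> 1 / (c1 * q * Vr)"
        using Vs consts_pos q0 Vr0 by (intro frac_le) auto
      also have "\<dots> \<le> K * t powr (-a)"
      proof -
        have "K * t powr (-a) = (c4 * Pr) powr a / (c1 * Vr * t powr a)"
          unfolding K_def using t0 by (simp add: powr_minus_divide field_simps)
        also have "1 / (c1 * q * Vr) \<le> \<dots>"
          using tq consts_pos q0 Vr0 ta0 by (simp add: field_simps)
        finally show ?thesis .
      qed
      finally have "hk_profile V \<phi> \<phi>inv t x y \<le> K * t powr (-a)"
        unfolding prof s_def by linarith
      moreover have "p t x y \<le> C0 * hk_profile V \<phi> \<phi>inv t x y" using hkC t0 by blast
      ultimately show ?thesis
        using C0 by (smt (verit) mult_left_mono mult.assoc)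
    qed
    define f where "f = (\<lambda>t::real. C0 * K * t powr (-a))"
    define F where "F = (\<lambda>t::real. - (C0 * K) * t powr (1 - a) / (a - 1))"
    have "(\<integral>\<^sup>+ t. ennreal (p t x y) * indicator {0<..} t \<partial>lborel)
       \<le> (\<integral>\<^sup>+ t. ennreal (C0 / Vr) * indicator {0..Pr} t + ennreal (f t) * indicator {Pr..} t \<partial>lborel)"
    proof (rule nn_integral_mono)
      fix t
      show "ennreal (p t x y) * indicator {0<..} t
            \<le> ennreal (C0 / Vr) * indicator {0..Pr} t + ennreal (f t) * indicator {Pr..} t"
      proof (cases "t > 0")
        case True
        show ?thesis
        proof (cases "t \<le> Pr")
          case True
          have "ennreal (p t x y) \<le> ennreal (C0 / Vr)" using up1[OF \<open>t > 0\<close> True] by (rule ennreal_leI)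
          hence "ennreal (p t x y) \<le> ennreal (C0 / Vr) + ennreal (f t) * indicator {Pr..} t"
            by (rule add_increasing2[rotated]) simp
          with \<open>t > 0\<close> True show ?thesis by simp
        next
          case False
          with \<open>t > 0\<close> up2[of t] show ?thesis unfolding f_def by (auto intro: ennreal_leI)
        qed
      qed simp
    qed
    also have "\<dots> = (\<integral>\<^sup>+ t. ennreal (C0 / Vr) * indicator {0..Pr} t \<partial>lborel)
                   + (\<integral>\<^sup>+ t. ennreal (f t) * indicator {Pr..} t \<partial>lborel)"
      unfolding f_def by (intro nn_integral_add) measurable
    also have "(\<integral>\<^sup>+ t. ennreal (C0 / Vr) * indicator {0..Pr} t \<partial>lborel) = ennreal (C0 / Vr * Pr)"
      by (subst nn_integral_cmult_indicator) (use Pr0 Vr0 C0 in \<open>auto simp: ennreal_mult[symmetric]\<close>)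
    also have "(\<integral>\<^sup>+ t. ennreal (f t) * indicator {Pr..} t \<partial>lborel) = ennreal (0 - F Pr)"
    proof (rule nn_integral_FTC_atLeast)
      show "f \<in> borel_measurable borel" unfolding f_def by measurable
      show "DERIV F t :> f t" if "Pr \<le> t" for t
      proof -
        have t0: "t > 0" using that Pr0 by linarith
        have d: "DERIV (\<lambda>t. t powr (1-a)) t :> (1-a) * t powr (1-a-1)"
          using has_real_derivative_powr[OF t0] .
        have "DERIV (\<lambda>t. - (C0 * K) * t powr (1 - a) / (a - 1)) t :> - (C0 * K) * ((1-a) * t powr (1-a-1)) / (a - 1)"
          by (intro DERIV_cdivide DERIV_cmult d)
        moreover have "- (C0 * K) * ((1-a) * t powr (1-a-1)) / (a - 1) = C0 * K * t powr (-a)"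
          using a1 by (simp add: field_simps)
        ultimately show ?thesis unfolding F_def f_def by simp
      qed
      show "0 \<le> f t" if "Pr \<le> t" for t unfolding f_def using C0 K0 by simp
      have "((\<lambda>t. t powr (1 - a)) \<longlongrightarrow> 0) at_top"
        using a1 by (intro tendsto_neg_powr filterlim_ident) auto
      hence "((\<lambda>t. - (C0 * K) * t powr (1 - a) / (a - 1)) \<longlongrightarrow> - (C0 * K) * 0 / (a - 1)) at_top"
        using a1 by (intro tendsto_intros) auto
      thus "(F \<longlongrightarrow> 0) at_top" unfolding F_def by simp
    qed
    also have "ennreal (C0 / Vr * Pr) + ennreal (0 - F Pr) \<le> ennreal (C * (Pr / Vr))"
    proof -
      have FP: "0 - F Pr = C0 * c4 powr a / (c1 * (a - 1)) * (Pr / Vr)"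
      proof -
        have "(c4 * Pr) powr a * Pr powr (1 - a) = c4 powr a * Pr"
          using Pr0 consts_pos by (simp add: powr_mult powr_diff field_simps)
        thus ?thesis unfolding F_def K_def using a1 Vr0 consts_pos
          by (simp add: field_simps)
      qed
      have nn: "0 \<le> C0 * c4 powr a / (c1 * (a - 1)) * (Pr / Vr)"
        using a1 Vr0 Pr0 consts_pos C0 by simp
      have "C0 / Vr * Pr + (0 - F Pr) \<le> C * (Pr / Vr)"
      proof -
        define X where "X = c4 powr a / (c1 * (a - 1))"
        define u where "u = Pr / Vr"
        have X0: "X \<ge> 0" unfolding X_def using a1 consts_pos by simp
        have u0: "u > 0" unfolding u_def using Pr0 Vr0 by simp
        have e1: "C0 / Vr * Pr = C0 * u" unfolding u_def by simp
        have "C0 * u + C0 * X * u = C0 * (1 + X) * u" by (simp add: algebra_simps)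
        also have "\<dots> \<le> 4 * (C0 * (1 + X) * u)" using C0 X0 u0 by simp
        also have "\<dots> = C * u" unfolding C_def X_def by simp
        finally have "C0 * u + C0 * X * u \<le> C * u" .
        moreover have "C0 * c4 powr a / (c1 * (a - 1)) * (Pr / Vr) = C0 * X * u"
          unfolding X_def u_def by simp
        ultimately show ?thesis unfolding FP e1 u_def[symmetric] by simp
      qed
      moreover have "0 \<le> C0 / Vr * Pr" using C0 Vr0 Pr0 by simp
      ultimately show ?thesis using nn FP by (simp add: ennreal_plus[symmetric] del: ennreal_plus)
    qed
    finally show "green_fun p x y \<le> ennreal (C * (\<phi> (dist x y) / V (dist x y)))"
      unfolding green_def' Pr_def Vr_def r_def .
  qed
qed

end
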